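(* Let $n\ge2$, $\omega\in(0,1)$, and let $B$ be a random variable with mean $0$ and variance $1$. Let $B_1,\dots,B_n$ be independent with $B_i\overset d=\mu_i+\sigma_iB$, $\sigma_i>0$, $\sigma_1\le\cdots\le\sigma_n$. Let $$\alpha=\sqrt{\frac{1-\omega}{2\omega}+\frac{\sigma_{n-1}}{2\sum_{i=1}^{n-1}\sigma_i}}.$$ Then $$C(\mathrm{Id},\boldsymbol\mu+\alpha\boldsymbol\sigma,\omega)\le\sqrt{2\omega}\sum_{i=1}^{n-1}\sigma_i,$$ where $\boldsymbol\mu+\alpha\boldsymbol\sigma$ is the schedule with $x_i=\mu_i+\alpha\sigma_i$.
   Context: Appointment model: a sequence is a permutation $\tau\in\mathsf S_n$, $\tau(i)$ the patient in slot $i$; a schedule is $\boldsymbol x=(x_1,\dots,x_n)$, $x_j$ the interarrival time between patient $j$ and the next patient. Waiting and idle times: $W_1=I_1=0$, $W_{i+1}=(W_i+B_{\tau(i)}-x_{\tau(i)})^+$, $I_{i+1}=(W_i+B_{\tau(i)}-x_{\tau(i)})^-$, $a^+=\max\{0,a\}$, $a^-=\max\{0,-a\}$. Cost $C(\tau,\boldsymbol x,\omega)=\omega\sum_{i=1}^n\mathbb EI_i+(1-\omega)\sum_{i=1}^n\mathbb EW_i$. $\mathrm{Id}$ is the identity permutation. *)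

theory Defs
  imports "HOL-Probability.Probability"
begin

text \<open>Patients and slots are indexed 1..n. For a sequence tau, schedule x and a
realisation b of the service times (b j = service time of patient j),
wait tau x b k is the waiting time W_(k+1) of the patient in slot k+1 and
idle tau x b k is the idle time I_(k+1); in particular W_1 = I_1 = 0.\<close>

fun wait :: "(nat \<Rightarrow> nat) \<Rightarrow> (nat \<Rightarrow> real) \<Rightarrow> (nat \<Rightarrow> real) \<Rightarrow> nat \<Rightarrow> real" where
  "wait tau x b 0 = 0"
| "wait tau x b (Suc k) = max 0 (wait tau x b k + b (tau (Suc k)) - x (tau (Suc k)))"

fun idle :: "(nat \<Rightarrow> nat) \<Rightarrow> (nat \<Rightarrow> real) \<Rightarrow> (nat \<Rightarrow> real) \<Rightarrow> nat \<Rightarrow> real" where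
  "idle tau x b 0 = 0"
| "idle tau x b (Suc k) = max 0 (- (wait tau x b k + b (tau (Suc k)) - x (tau (Suc k))))"

definition cost :: "'a measure \<Rightarrow> (nat \<Rightarrow> 'a \<Rightarrow> real) \<Rightarrow> nat \<Rightarrow> (nat \<Rightarrow> nat)
    \<Rightarrow> (nat \<Rightarrow> real) \<Rightarrow> real \<Rightarrow> real" where
  "cost M Bs n tau x w =
     w * (\<Sum>k<n. integral\<^sup>L M (\<lambda>s. idle tau x (\<lambda>j. Bs j s) k))
     + (1 - w) * (\<Sum>k<n. integral\<^sup>L M (\<lambda>s. wait tau x (\<lambda>j. Bs j s) k))"

end

theory Submission
  imports Defs
begin

lemma polyP:
  fixes b w :: real
  assumes "0<b" "b\<le>1" "1-w \<le> b^2" "w \<le> 1"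
  shows "2*b^2*(b^2+w) + 3*b^2 - 1 + w \<le> 4*b*(b^2+w)"
proof -
  define t where "t = w - (1 - b^2)"
  have t0: "0 \<le> t" "t \<le> b^2" using assms t_def by auto
  have e: "2*b^2*(b^2+w) + 3*b^2 - 1 + w - 4*b*(b^2+w) = 4*b*(b-1) + t*(2*b^2-4*b+1)"
    unfolding t_def by (simp add: algebra_simps power2_eq_square power3_eq_cube)
  have c: "2*b^3 - 4*b^2 + 5*b - 4 < 0"
  proof -
    have "b^3 \<le> b^2" using assms by (simp add: power_decreasing)
    moreover have "-2*b^2 + 5*b - 4 < 0"
    proof -
      have "-2*b^2 + 5*b - 4 = -2*(b-5/4)^2 - 7/8" by (simp add: power2_eq_square algebra_simps)
      moreover have "0 \<le> (b-5/4)^2" by simp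
      ultimately show ?thesis by linarith
    qed
    ultimately show ?thesis by linarith
  qed
  have "4*b*(b-1) + t*(2*b^2-4*b+1) \<le> 0"
  proof (cases "2*b^2-4*b+1 \<le> 0")
    case True
    then have "t*(2*b^2-4*b+1) \<le> 0" using t0 by (simp add: mult_nonneg_nonpos)
    moreover have "4*b*(b-1) \<le> 0" using assms by (simp add: mult_nonneg_nonpos)
    ultimately show ?thesis by linarith
  next
    case False
    then have "t*(2*b^2-4*b+1) \<le> b^2*(2*b^2-4*b+1)" using t0 by (simp add: mult_right_mono)
    moreover have "4*b*(b-1) + b^2*(2*b^2-4*b+1) = b*(2*b^3 - 4*b^2 + 5*b - 4)"
      by (simp add: algebra_simps power2_eq_square power3_eq_cube)
    moreover have "b*(2*b^3 - 4*b^2 + 5*b - 4) \<le> 0" using c assms by (simp add: mult_nonneg_nonpos)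
    ultimately show ?thesis by linarith
  qed
  then show ?thesis using e by linarith
qed

lemma final_alg:
  fixes w S r a u A :: real
  assumes w: "0<w" "w<1" and r: "0<r" "r\<le>S" and a: "a = sqrt((1-w)/(2*w) + r/(2*S))"
    and u: "0 \<le> u" "u \<le> A" and c: "2*a*A + u^2/r \<le> S"
  shows "w*(u + a*S) + (1-w)*A \<le> sqrt(2*w)*S"
proof -
  define g where "g = sqrt (2*w)"
  have g: "g > 0" "g^2 = 2*w" using w g_def by auto
  have Sp: "S > 0" using r by linarith
  have rad: "(1-w)/(2*w) + r/(2*S) > 0" using w r Sp by (simp add: add_pos_pos)
  have apos: "a > 0" using a rad by simp
  have a2: "a^2 = (1-w)/(2*w) + r/(2*S)" using a rad by simp
  have a2': "2*w*a^2*S = (1-w)*S + w*r" using a2 w Sp by (simp add: field_simps)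
  define b where "b = a*g"
  have bpos: "b > 0" using apos g b_def by simp
  have b2: "b^2 = 2*w*a^2" using g b_def by (simp add: power_mult_distrib)
  have b2S: "b^2*S = (1-w)*S + w*r" using b2 a2' by simp
  have "w*r \<le> w*S" using w r by (simp add: mult_left_mono)
  hence "b^2*S \<le> 1*S" using b2S by (simp add: algebra_simps)
  hence b21: "b^2 \<le> 1" using Sp by simp
  hence b1: "b \<le> 1" using bpos by (simp add: power_le_one_iff)
  have bb: "b^2 \<le> b" using bpos b1 by (simp add: power2_eq_square mult_left_le_one_le)
  have b2w: "1 - w \<le> b^2"
  proof -
    have "(1-w)*S \<le> b^2*S" using b2S w r by simp
    thus ?thesis using Sp by simp
  qed
  define T where "T = S + r/(4*a^2)"
  have tang: "u/a - r/(4*a^2) \<le> u^2/r"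
  proof -
    have "0 \<le> (u - r/(2*a))^2" by simp
    moreover have "(u - r/(2*a))^2 = u^2 - u*r/a + r^2/(4*a^2)" using apos
      by (simp add: power2_diff power_divide power_mult_distrib)
    ultimately have "0 \<le> u^2 - u*r/a + r^2/(4*a^2)" by simp
    hence "0 \<le> (u^2 - u*r/a + r^2/(4*a^2))/r" using r by simp
    also have "\<dots> = u^2/r - u/a + r/(4*a^2)" using r by (simp add: field_simps power2_eq_square)
    finally show ?thesis by linarith
  qed
  have h1: "2*a*A + u/a \<le> T" using c tang T_def by linarith
  define p1 where "p1 = (1-w)/(2*a)"
  define p2 where "p2 = 1/(2*a+1/a)"
  define p where "p = max p1 p2"
  have pp: "p \<ge> 0" using p_def p2_def apos by (simp add: le_max_iff_disj)
  have q1: "2*a*p - (1-w) \<ge> 0"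
  proof -
    have "2*a*p1 = 1-w" using apos p1_def by simp
    moreover have "p \<ge> p1" using p_def by simp
    ultimately show ?thesis using apos by (smt (verit) mult_left_mono)
  qed
  have q2: "p*(2*a+1/a) - 1 \<ge> 0"
  proof -
    have pos: "2*a+1/a > 0" using apos by (simp add: add_pos_pos)
    have "p2*(2*a+1/a) = 1" using pos p2_def by simp
    moreover have "p \<ge> p2" using p_def by simp
    ultimately show ?thesis using pos by (smt (verit) mult_right_mono)
  qed
  have F: "(1-w)*A + w*u \<le> p*(2*a*A + u/a)"
  proof -
    have "(2*a*p - (1-w))*u \<le> (2*a*p - (1-w))*A" using q1 u by (simp add: mult_left_mono)
    moreover have "0 \<le> (p*(2*a+1/a) - 1)*u" using q2 u by simp
    moreover have "p*(2*a*A + u/a) - ((1-w)*A + w*u) = (2*a*p - (1-w))*A + (p/a - w)*u"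
      by (simp add: algebra_simps)
    moreover have "(p*(2*a+1/a) - 1)*u = (2*a*p - (1-w))*u + (p/a - w)*u"
      by (simp add: algebra_simps)
    ultimately show ?thesis by linarith
  qed
  have F2: "(1-w)*A + w*u \<le> p*T" using F h1 pp by (smt (verit) mult_left_mono)
  have cond1: "w*a*S + p1*T \<le> g*S"
  proof -
    have "(1-w)*r/(4*a^2) \<le> w*r"
    proof -
      have "4*w*a^2 = 2*b^2" using b2 by simp
      hence "1 - w \<le> 4*w*a^2" using b2w w by linarith
      hence "(1-w)/(4*a^2) \<le> w" using apos by (simp add: field_simps)
      thus ?thesis using r by (smt (verit, ccfv_SIG) mult_left_mono times_divide_eq_right mult.commute)
    qed
    moreover have "2*a*(w*a*S + p1*T) = 2*w*a^2*S + (1-w)*S + (1-w)*r/(4*a^2)"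
      using apos unfolding p1_def T_def by (simp add: field_simps power2_eq_square)
    ultimately have "2*a*(w*a*S + p1*T) \<le> 2*b^2*S"
      using a2' b2S by linarith
    also have "\<dots> \<le> 2*b*S" using bb Sp by simp
    also have "\<dots> = 2*a*(g*S)" unfolding b_def by simp
    finally show ?thesis using apos by simp
  qed
  have cond2: "w*a*S + p2*T \<le> g*S"
  proof -
    have e1: "w*a*S = g*S*b/2" using g unfolding b_def by (simp add: power2_eq_square algebra_simps)
    have e2: "p2*T = g*S*(3*b^2-1+w)/(4*b*(b^2+w))"
    proof -
      have k: "S*(3*b^2 - 1 + w) = w*(4*a^2*S + r)" using a2' b2 by (simp add: algebra_simps)
      have bw: "4*b*(b^2+w) = (4*a*(2*a^2+1))*(g*w)" using b2 unfolding b_def by (simp add: algebra_simps)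
      have "g*S*(3*b^2-1+w)/(4*b*(b^2+w)) = g*(S*(3*b^2-1+w))/(4*b*(b^2+w))" by (simp add: mult.assoc)
      also have "\<dots> = g*(w*(4*a^2*S + r))/((4*a*(2*a^2+1))*(g*w))" by (simp only: k bw)
      also have "\<dots> = ((4*a^2*S + r)*(g*w))/((4*a*(2*a^2+1))*(g*w))" by (simp add: ac_simps)
      also have "\<dots> = (4*a^2*S + r)/(4*a*(2*a^2+1))"
        by (rule nonzero_mult_divide_mult_cancel_right) (use g w in simp)
      also have "\<dots> = p2*T"
      proof -
        have d1: "2*a^2+1 > 0" by (simp add: add_nonneg_pos)
        have p2e: "p2 = a/(2*a^2+1)" unfolding p2_def using apos d1
          by (simp add: field_simps power2_eq_square)
        have Te: "T = (4*a^2*S + r)/(4*a^2)" unfolding T_def using apos by (simp add: field_simps)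
        have "a/(2*a^2+1) * ((4*a^2*S + r)/(4*a^2)) = (a*(4*a^2*S + r))/((2*a^2+1)*(4*a^2))"
          by (simp add: times_divide_times_eq)
        also have "(2*a^2+1)*(4*a^2) = a*(4*a*(2*a^2+1))" by (simp add: power2_eq_square algebra_simps)
        also have "(a*(4*a^2*S + r))/(a*(4*a*(2*a^2+1))) = (4*a^2*S + r)/(4*a*(2*a^2+1))"
          by (rule nonzero_mult_divide_mult_cancel_left) (use apos in simp)
        finally show ?thesis unfolding p2e Te by simp
      qed
      finally show ?thesis by simp
    qed
    have pw: "2*b^2*(b^2+w) + 3*b^2 - 1 + w \<le> 4*b*(b^2+w)"
      by (rule polyP) (use bpos b1 b2w w in auto)
    have "b/2 + (3*b^2-1+w)/(4*b*(b^2+w)) \<le> 1"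
    proof -
      have pos: "4*b*(b^2+w) > 0" using bpos w by (simp add: add_nonneg_pos)
      have "(b/2 + (3*b^2-1+w)/(4*b*(b^2+w))) * (4*b*(b^2+w)) = 2*b^2*(b^2+w) + 3*b^2 - 1 + w"
        using pos by (simp add: field_simps power2_eq_square)
      with pw have "(b/2 + (3*b^2-1+w)/(4*b*(b^2+w))) * (4*b*(b^2+w)) \<le> 1 * (4*b*(b^2+w))" by simp
      thus ?thesis using mult_le_cancel_right_pos[OF pos] by blast
    qed
    hence "g*S*(b/2 + (3*b^2-1+w)/(4*b*(b^2+w))) \<le> g*S" using g Sp by simp
    moreover have "g*S*(b/2 + (3*b^2-1+w)/(4*b*(b^2+w))) = g*S*b/2 + g*S*(3*b^2-1+w)/(4*b*(b^2+w))"
      by (simp add: distrib_left)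
    ultimately show ?thesis using e1 e2 by linarith
  qed
  have "w*(u + a*S) + (1-w)*A = w*a*S + ((1-w)*A + w*u)" by (simp add: algebra_simps)
  also have "\<dots> \<le> w*a*S + p*T" using F2 by simp
  also have "\<dots> \<le> g*S" using cond1 cond2 p_def by (simp add: max_def)
  finally show ?thesis using g_def by simp
qed
lemma wait_cong:
  "(\<And>j. 1 \<le> j \<Longrightarrow> j \<le> k \<Longrightarrow> b j = b' j) \<Longrightarrow> wait id x b k = wait id x b' k"
  by (induction k) auto

lemma wait_meas:
  "{1..k} \<subseteq> A \<Longrightarrow> (\<lambda>f. wait id x f k) \<in> borel_measurable (PiM A (\<lambda>_. (borel :: real measure)))"
proof (induction k)
  case 0
  then show ?case by simp
next
  case (Suc k)
  then have "Suc k \<in> A" "{1..k} \<subseteq> A" by auto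
  have [measurable]: "(\<lambda>f. f (Suc k)) \<in> borel_measurable (PiM A (\<lambda>_. (borel :: real measure)))"
    by (rule measurable_component_singleton) fact
  have [measurable]: "(\<lambda>f. wait id x f k) \<in> borel_measurable (PiM A (\<lambda>_. (borel :: real measure)))"
    using Suc.IH \<open>{1..k} \<subseteq> A\<close> by blast
  have eq: "(\<lambda>f. wait id x f (Suc k)) = (\<lambda>f. max 0 (wait id x f k + f (Suc k) - x (Suc k)))"
    by (simp only: wait.simps id_apply)
  show ?case unfolding eq by measurable
qed

lemma transfer_distr:
  fixes X :: "'a \<Rightarrow> real" and G :: "'b \<Rightarrow> real" and f :: "real \<Rightarrow> real"
  assumes "distr M borel X = distr N borel G" "X \<in> borel_measurable M" "G \<in> borel_measurable N"
    "f \<in> borel_measurable (borel :: real measure)"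
  shows "integral\<^sup>L M (\<lambda>\<omega>. f (X \<omega>)) = integral\<^sup>L N (\<lambda>s. f (G s))"
    and "integrable M (\<lambda>\<omega>. f (X \<omega>)) \<longleftrightarrow> integrable N (\<lambda>s. f (G s))"
proof -
  show "integral\<^sup>L M (\<lambda>\<omega>. f (X \<omega>)) = integral\<^sup>L N (\<lambda>s. f (G s))"
    using integral_distr[OF assms(2,4), symmetric] integral_distr[OF assms(3,4)] assms(1) by simp
  show "integrable M (\<lambda>\<omega>. f (X \<omega>)) \<longleftrightarrow> integrable N (\<lambda>s. f (G s))"
    using integrable_distr_eq[OF assms(2,4), symmetric] integrable_distr_eq[OF assms(3,4)] assms(1) by simp
qed

lemma (in prob_space) sq_mean_le:
  fixes f :: "'a \<Rightarrow> real"
  assumes "integrable M f" "integrable M (\<lambda>x. (f x)^2)"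
  shows "(expectation f)^2 \<le> expectation (\<lambda>x. (f x)^2)"
proof -
  define c where "c = expectation f"
  have "0 \<le> expectation (\<lambda>x. (f x - c)^2)" by (simp add: integral_nonneg_AE)
  also have "(\<lambda>x. (f x - c)^2) = (\<lambda>x. (f x)^2 - 2*c * f x + c^2)"
    by (simp add: power2_diff algebra_simps)
  also have "expectation \<dots> = expectation (\<lambda>x. (f x)^2) - 2*c*c + c^2"
    using assms unfolding c_def by (simp add: prob_space)
  finally show ?thesis unfolding c_def by (simp add: power2_eq_square)
qed


theorem proposition5p1:
  fixes M :: "'a measure" and N :: "'b measure"
    and Bs :: "nat \<Rightarrow> 'a \<Rightarrow> real" and B :: "'b \<Rightarrow> real"
    and mu sigma :: "nat \<Rightarrow> real" and n :: nat and w :: real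
  assumes n2: "n \<ge> 2"
    and w: "0 < w" "w < 1"
    and M: "prob_space M"
    and N: "prob_space N"
    and B_rv: "B \<in> borel_measurable N"
    and B_int: "integrable N B" "integrable N (\<lambda>s. (B s)\<^sup>2)"
    and B_mean: "prob_space.expectation N B = 0"
    and B_var: "prob_space.variance N B = 1"
    and indep: "prob_space.indep_vars M (\<lambda>_. borel) Bs {1..n}"
    and distr: "\<And>i. i \<in> {1..n} \<Longrightarrow>
                  distr M borel (Bs i) = distr N borel (\<lambda>s. mu i + sigma i * B s)"
    and sigma_pos: "\<And>i. i \<in> {1..n} \<Longrightarrow> sigma i > 0"
    and sigma_mono: "\<And>i j. 1 \<le> i \<Longrightarrow> i \<le> j \<Longrightarrow> j \<le> n \<Longrightarrow> sigma i \<le> sigma j"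
  shows "cost M Bs n id
           (\<lambda>i. mu i + sqrt ((1 - w) / (2 * w) + sigma (n - 1) / (2 * (\<Sum>i=1..n-1. sigma i))) * sigma i) w
         \<le> sqrt (2 * w) * (\<Sum>i=1..n-1. sigma i)"
proof -
  interpret prob_space M by (rule M)
  interpret N: prob_space N by (rule N)
  define S where "S = (\<Sum>i=1..n-1. sigma i)"
  define sl where "sl = sigma (n-1)"
  define \<alpha> where "\<alpha> = sqrt ((1 - w) / (2 * w) + sl / (2 * S))"
  define x where "x = (\<lambda>i. mu i + \<alpha> * sigma i)"
  have goal_eq: "(\<lambda>i. mu i + sqrt ((1 - w) / (2 * w) + sigma (n - 1) / (2 * (\<Sum>i=1..n-1. sigma i))) * sigma i) = x"
    unfolding x_def \<alpha>_def sl_def S_def ..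
  define W where "W = (\<lambda>k \<omega>. wait id x (\<lambda>j. Bs j \<omega>) k)"
  define I where "I = (\<lambda>k \<omega>. idle id x (\<lambda>j. Bs j \<omega>) k)"
  define D where "D = (\<lambda>k \<omega>. Bs k \<omega> - x k)"
  define a where "a = (\<lambda>k. expectation (W k))"
  define \<Phi> where "\<Phi> = (\<lambda>k. expectation (\<lambda>\<omega>. (W k \<omega>)^2))"
  have cost_eq: "cost M Bs n id x w = w * (\<Sum>k<n. expectation (I k)) + (1-w) * (\<Sum>k<n. a k)"
    unfolding cost_def I_def a_def W_def ..
  have sl_pos: "sl > 0" using sigma_pos n2 unfolding sl_def by simp
  have sl_le: "sl \<le> S" unfolding S_def sl_def
    by (rule member_le_sum) (use n2 in \<open>auto intro!: less_imp_le sigma_pos\<close>)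
  have S_pos: "S > 0" using sl_pos sl_le by linarith
  have rad: "(1-w)/(2*w) + sl/(2*S) > 0" using w sl_pos S_pos by (simp add: add_pos_pos)
  have alpha_pos: "\<alpha> > 0" using rad unfolding \<alpha>_def by simp
  have rvB: "\<And>i. i \<in> {1..n} \<Longrightarrow> random_variable borel (Bs i)"
    using indep unfolding indep_vars_def by blast
  have EB0: "integral\<^sup>L N B = 0" using B_mean .
  have EB2: "integral\<^sup>L N (\<lambda>s. (B s)^2) = 1" using B_var B_mean by simp
  have Dfacts: "integrable M (D i) \<and> integrable M (\<lambda>\<omega>. (D i \<omega>)^2) \<and> expectation (D i) = - \<alpha> * sigma i
      \<and> expectation (\<lambda>\<omega>. (D i \<omega>)^2) = (1 + \<alpha>^2) * (sigma i)^2 \<and> D i \<in> borel_measurable M"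
    if i: "i \<in> {1..n}" for i
  proof -
    define G where "G = (\<lambda>s. mu i + sigma i * B s)"
    have G_meas: "G \<in> borel_measurable N" unfolding G_def using B_rv by measurable
    note tr = transfer_distr[OF distr[OF i, folded G_def] rvB[OF i] G_meas]
    have f1: "(\<lambda>y. y - x i) \<in> borel_measurable (borel :: real measure)" by simp
    have f2: "(\<lambda>y. (y - x i)^2) \<in> borel_measurable (borel :: real measure)" by simp
    have GD: "(\<lambda>s. G s - x i) = (\<lambda>s. sigma i * B s - \<alpha> * sigma i)" unfolding G_def x_def by auto
    have GD2: "(\<lambda>s. (G s - x i)^2) = (\<lambda>s. (sigma i)^2 * (B s)^2 - (2*\<alpha>*(sigma i)^2) * B s + \<alpha>^2 * (sigma i)^2)"
      unfolding G_def x_def by (auto simp: power2_eq_square algebra_simps)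
    have int1: "integrable N (\<lambda>s. G s - x i)" unfolding GD using B_int by simp
    have int2: "integrable N (\<lambda>s. (G s - x i)^2)" unfolding GD2 using B_int by simp
    have E1: "integral\<^sup>L N (\<lambda>s. G s - x i) = - \<alpha> * sigma i" unfolding GD using B_int EB0
      by (simp add: N.prob_space)
    have E2: "integral\<^sup>L N (\<lambda>s. (G s - x i)^2) = (1 + \<alpha>^2) * (sigma i)^2" unfolding GD2 using B_int EB0 EB2
      by (simp add: N.prob_space algebra_simps)
    have Deq: "D i = (\<lambda>\<omega>. Bs i \<omega> - x i)" unfolding D_def ..
    show ?thesis unfolding Deq
      using tr(1)[OF f1] tr(2)[OF f1] tr(1)[OF f2] tr(2)[OF f2] int1 int2 E1 E2 rvB[OF i] by simp
  qed
  have W0: "W 0 = (\<lambda>_. 0)" unfolding W_def by simp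
  have I0: "I 0 = (\<lambda>_. 0)" unfolding I_def by simp
  have Wsimp: "W (Suc k) \<omega> = max 0 (W k \<omega> + D (Suc k) \<omega>)" for k \<omega> unfolding W_def D_def by simp
  have Isimp: "I (Suc k) \<omega> = max 0 (- (W k \<omega> + D (Suc k) \<omega>))" for k \<omega> unfolding I_def W_def D_def by simp
  have Wnn: "W k \<omega> \<ge> 0" for k \<omega> by (cases k) (simp_all add: W0 Wsimp)
  have Wfacts: "W k \<in> borel_measurable M \<and> integrable M (W k) \<and> integrable M (\<lambda>\<omega>. (W k \<omega>)^2)"
    if "k \<le> n" for k
    using that
  proof (induction k)
    case 0
    then show ?case by (simp add: W0)
  next
    case (Suc k)
    then have k: "k \<le> n" "Suc k \<in> {1..n}" by auto
    note IH = Suc.IH[OF k(1)]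
    note DF = Dfacts[OF k(2)]
    have Weq: "W (Suc k) = (\<lambda>\<omega>. max 0 (W k \<omega> + D (Suc k) \<omega>))" by (rule ext) (simp add: Wsimp)
    have [measurable]: "W k \<in> borel_measurable M" using IH by simp
    have [measurable]: "D (Suc k) \<in> borel_measurable M" using DF by simp
    have m: "W (Suc k) \<in> borel_measurable M" unfolding Weq by measurable
    have i1: "integrable M (W (Suc k))"
    proof (rule Bochner_Integration.integrable_bound[OF _ m])
      show "integrable M (\<lambda>\<omega>. W k \<omega> + \<bar>D (Suc k) \<omega>\<bar>)" using IH DF by simp
      show "AE \<omega> in M. norm (W (Suc k) \<omega>) \<le> norm (W k \<omega> + \<bar>D (Suc k) \<omega>\<bar>)"
        using Wnn by (auto simp: Wsimp)
    qed
    have m2: "(\<lambda>\<omega>. (W (Suc k) \<omega>)^2) \<in> borel_measurable M" using m by measurable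
    have i2: "integrable M (\<lambda>\<omega>. (W (Suc k) \<omega>)^2)"
    proof (rule Bochner_Integration.integrable_bound[OF _ m2])
      show "integrable M (\<lambda>\<omega>. 2 * (W k \<omega>)^2 + 2 * (D (Suc k) \<omega>)^2)" using IH DF by simp
      show "AE \<omega> in M. norm ((W (Suc k) \<omega>)^2) \<le> norm (2 * (W k \<omega>)^2 + 2 * (D (Suc k) \<omega>)^2)"
      proof (rule AE_I2)
        fix \<omega>
        have "(W (Suc k) \<omega>)^2 \<le> (W k \<omega> + D (Suc k) \<omega>)^2"
          using Wnn[of k \<omega>] by (auto simp: Wsimp max_def power2_eq_square)
        also have "\<dots> \<le> 2 * (W k \<omega>)^2 + 2 * (D (Suc k) \<omega>)^2"
          using zero_le_power2[of "W k \<omega> - D (Suc k) \<omega>"] by (simp add: power2_eq_square algebra_simps)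
        finally show "norm ((W (Suc k) \<omega>)^2) \<le> norm (2 * (W k \<omega>)^2 + 2 * (D (Suc k) \<omega>)^2)"
          by simp
      qed
    qed
    show ?case using m i1 i2 by simp
  qed
  have indepWD: "indep_var borel (W k) borel (D (Suc k))" if k: "Suc k \<le> n" for k
  proof -
    have iv: "indep_var (PiM {1..k} (\<lambda>_. borel)) (\<lambda>\<omega>. restrict (\<lambda>i. Bs i \<omega>) {1..k})
                        (PiM {Suc k} (\<lambda>_. borel)) (\<lambda>\<omega>. restrict (\<lambda>i. Bs i \<omega>) {Suc k})"
      by (rule indep_var_restrict[OF indep]) (use k in auto)
    have m1: "(\<lambda>f. wait id x f k) \<in> borel_measurable (PiM {1..k} (\<lambda>_. (borel :: real measure)))"
      by (rule wait_meas) simp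
    have mc: "(\<lambda>f. f (Suc k)) \<in> borel_measurable (PiM {Suc k} (\<lambda>_. (borel :: real measure)))"
      by (rule measurable_component_singleton) simp
    have m2: "(\<lambda>f. f (Suc k) - x (Suc k)) \<in> borel_measurable (PiM {Suc k} (\<lambda>_. (borel :: real measure)))"
      using mc by measurable
    have c: "indep_var borel ((\<lambda>f. wait id x f k) \<circ> (\<lambda>\<omega>. restrict (\<lambda>i. Bs i \<omega>) {1..k}))
                       borel ((\<lambda>f. f (Suc k) - x (Suc k)) \<circ> (\<lambda>\<omega>. restrict (\<lambda>i. Bs i \<omega>) {Suc k}))"
      by (rule indep_var_compose[OF iv m1 m2])
    have e1: "(\<lambda>f. wait id x f k) \<circ> (\<lambda>\<omega>. restrict (\<lambda>i. Bs i \<omega>) {1..k}) = W k"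
      unfolding W_def by (rule ext) (simp, rule wait_cong, simp)
    have e2: "(\<lambda>f. f (Suc k) - x (Suc k)) \<circ> (\<lambda>\<omega>. restrict (\<lambda>i. Bs i \<omega>) {Suc k}) = D (Suc k)"
      unfolding D_def by (rule ext) simp
    show ?thesis using c unfolding e1 e2 .
  qed
  have step: "expectation (I (Suc k)) = a (Suc k) - a k + \<alpha> * sigma (Suc k)
      \<and> \<Phi> (Suc k) \<le> \<Phi> k + (sigma (Suc k))^2 - 2*\<alpha>* sigma (Suc k) * a (Suc k)"
    if k: "Suc k \<le> n" for k
  proof -
    define sg where "sg = sigma (Suc k)"
    have k2: "Suc k \<in> {1..n}" "k \<le> n" using k by auto
    note DF = Dfacts[OF k2(1)]
    note WF = Wfacts[OF k2(2)]
    note WF' = Wfacts[OF k]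
    define Z where "Z = (\<lambda>\<omega>. W k \<omega> + D (Suc k) \<omega>)"
    have Zsplit: "Z \<omega> = W (Suc k) \<omega> - I (Suc k) \<omega>" for \<omega>
      unfolding Z_def Wsimp Isimp by (simp add: max_def)
    have Zsq: "(Z \<omega>)^2 = (W (Suc k) \<omega>)^2 + (I (Suc k) \<omega>)^2" for \<omega>
      unfolding Z_def Wsimp Isimp by (simp add: max_def power2_eq_square algebra_simps)
    have iv: "indep_var borel (W k) borel (D (Suc k))" by (rule indepWD[OF k])
    have intWD: "integrable M (\<lambda>\<omega>. W k \<omega> * D (Suc k) \<omega>)"
      using indep_var_integrable[OF iv] WF DF by simp
    have EWD: "expectation (\<lambda>\<omega>. W k \<omega> * D (Suc k) \<omega>) = a k * (- \<alpha> * sg)"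
      using indep_var_lebesgue_integral[OF iv] WF DF unfolding a_def sg_def by simp
    have intZ: "integrable M Z" unfolding Z_def using WF DF by simp
    have EZ: "expectation Z = a k - \<alpha> * sg" unfolding Z_def a_def sg_def using WF DF by simp
    have Z2eq: "(\<lambda>\<omega>. (Z \<omega>)^2) = (\<lambda>\<omega>. (W k \<omega>)^2 + 2 * (W k \<omega> * D (Suc k) \<omega>) + (D (Suc k) \<omega>)^2)"
      unfolding Z_def by (auto simp: power2_eq_square algebra_simps)
    have intZ2: "integrable M (\<lambda>\<omega>. (Z \<omega>)^2)" unfolding Z2eq using WF DF intWD by simp
    have EZ2: "expectation (\<lambda>\<omega>. (Z \<omega>)^2) = \<Phi> k + 2 * (a k * (- \<alpha> * sg)) + (1 + \<alpha>^2) * sg^2"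
      unfolding Z2eq \<Phi>_def sg_def using WF DF intWD EWD[unfolded sg_def] by simp
    have Ieq: "I (Suc k) = (\<lambda>\<omega>. W (Suc k) \<omega> - Z \<omega>)" using Zsplit by (auto simp: algebra_simps)
    have intI: "integrable M (I (Suc k))" unfolding Ieq using WF' intZ by simp
    have EI: "expectation (I (Suc k)) = a (Suc k) - a k + \<alpha> * sg"
      unfolding Ieq using WF' intZ EZ unfolding a_def by simp
    have I2eq: "(\<lambda>\<omega>. (I (Suc k) \<omega>)^2) = (\<lambda>\<omega>. (Z \<omega>)^2 - (W (Suc k) \<omega>)^2)" using Zsq by auto
    have intI2: "integrable M (\<lambda>\<omega>. (I (Suc k) \<omega>)^2)" unfolding I2eq using WF' intZ2 by simp
    have EI2: "expectation (\<lambda>\<omega>. (I (Suc k) \<omega>)^2) = expectation (\<lambda>\<omega>. (Z \<omega>)^2) - \<Phi> (Suc k)"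
      unfolding I2eq \<Phi>_def using WF' intZ2 by simp
    have J: "(expectation (I (Suc k)))^2 \<le> expectation (\<lambda>\<omega>. (I (Suc k) \<omega>)^2)"
      by (rule sq_mean_le[OF intI intI2])
    have "\<Phi> (Suc k) \<le> \<Phi> k + 2 * (a k * (- \<alpha> * sg)) + (1 + \<alpha>^2) * sg^2 - (a (Suc k) - a k + \<alpha> * sg)^2"
      using J[unfolded EI] EI2 EZ2 by linarith
    also have "\<dots> = \<Phi> k + sg^2 - 2 * \<alpha> * sg * a (Suc k) - (a (Suc k) - a k)^2"
      by (simp add: power2_eq_square algebra_simps)
    also have "\<dots> \<le> \<Phi> k + sg^2 - 2 * \<alpha> * sg * a (Suc k)" by simp
    finally show ?thesis using EI unfolding sg_def by simp
  qed
  have a0: "a 0 = 0" unfolding a_def W0 by simp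
  have Phi0: "\<Phi> 0 = 0" unfolding \<Phi>_def W0 by simp
  have ann: "a k \<ge> 0" for k unfolding a_def using Wnn by (simp add: integral_nonneg_AE)
  have Phinn: "\<Phi> k \<ge> 0" for k unfolding \<Phi>_def by (simp add: integral_nonneg_AE)
  obtain m where m: "n = Suc m" "1 \<le> m" using n2 by (cases n) auto
  have nm: "n - 1 = m" using m by simp
  define A where "A = (\<Sum>k<m. a (Suc k))"
  have sumS: "(\<Sum>k<m. sigma (Suc k)) = S" unfolding S_def nm by (simp add: sum.atLeast1_atMost_eq)
  have sumI: "(\<Sum>k<n. expectation (I k)) = a m + \<alpha> * S"
  proof -
    have "(\<Sum>k<n. expectation (I k)) = (\<Sum>k<m. expectation (I (Suc k)))"
      unfolding m(1) sum.lessThan_Suc_shift by (simp add: I0)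
    also have "\<dots> = (\<Sum>k<m. (a (Suc k) - a k) + \<alpha> * sigma (Suc k))"
      by (rule sum.cong) (use step m in auto)
    also have "\<dots> = (\<Sum>k<m. a (Suc k) - a k) + \<alpha> * (\<Sum>k<m. sigma (Suc k))"
      by (simp add: sum.distrib sum_distrib_left)
    also have "\<dots> = a m + \<alpha> * S" unfolding sumS sum_lessThan_telescope a0 by simp
    finally show ?thesis .
  qed
  have sumA: "(\<Sum>k<n. a k) = A" unfolding A_def m(1) sum.lessThan_Suc_shift by (simp add: a0)
  have rec: "2 * \<alpha> * (\<Sum>k<j. a (Suc k)) + \<Phi> j / sigma j \<le> (\<Sum>k<j. sigma (Suc k))"
    if "1 \<le> j" "j \<le> m" for j
    using that
  proof (induction j)
    case 0
    then show ?case by simp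
  next
    case (Suc j)
    define sg where "sg = sigma (Suc j)"
    have sgpos: "sg > 0" unfolding sg_def using Suc.prems m by (intro sigma_pos) auto
    have st: "\<Phi> (Suc j) \<le> \<Phi> j + sg^2 - 2 * \<alpha> * sg * a (Suc j)"
      using step[of j] Suc.prems m unfolding sg_def by auto
    have "\<Phi> (Suc j) / sg \<le> (\<Phi> j + sg^2 - 2 * \<alpha> * sg * a (Suc j)) / sg"
      using st sgpos by (simp add: divide_right_mono)
    also have "\<dots> = \<Phi> j / sg + sg - 2 * \<alpha> * a (Suc j)"
      using sgpos by (simp add: field_simps power2_eq_square)
    finally have d: "\<Phi> (Suc j) / sg \<le> \<Phi> j / sg + sg - 2 * \<alpha> * a (Suc j)" .
    show ?case
    proof (cases "j = 0")
      case True
      then show ?thesis using d Phi0 unfolding sg_def by simp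
    next
      case False
      then have j1: "1 \<le> j" by simp
      have IH: "2 * \<alpha> * (\<Sum>k<j. a (Suc k)) + \<Phi> j / sigma j \<le> (\<Sum>k<j. sigma (Suc k))"
        using Suc.IH j1 Suc.prems by simp
      have sjpos: "sigma j > 0" using j1 Suc.prems m by (intro sigma_pos) auto
      have sjle: "sigma j \<le> sg" unfolding sg_def using j1 Suc.prems m by (intro sigma_mono) auto
      have "\<Phi> j / sg \<le> \<Phi> j / sigma j" using sjpos sjle Phinn[of j] by (simp add: divide_left_mono)
      then show ?thesis using d IH unfolding sg_def sum.lessThan_Suc distrib_left by linarith
    qed
  qed
  have R: "2 * \<alpha> * A + \<Phi> m / sl \<le> S"
    using rec[of m] m sumS unfolding A_def sl_def nm by simp
  have uA: "a m \<le> A"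
  proof -
    have "a (Suc (m-1)) \<le> A" unfolding A_def
      by (rule member_le_sum[where f = "\<lambda>k. a (Suc k)"]) (use m ann in auto)
    then show ?thesis using m by simp
  qed
  have WFm: "integrable M (W m)" "integrable M (\<lambda>\<omega>. (W m \<omega>)^2)" using Wfacts[of m] m by auto
  have usq: "(a m)^2 \<le> \<Phi> m" unfolding a_def \<Phi>_def by (rule sq_mean_le[OF WFm])
  have "(a m)^2 / sl \<le> \<Phi> m / sl" using usq sl_pos by (simp add: divide_right_mono)
  then have c: "2 * \<alpha> * A + (a m)^2 / sl \<le> S" using R by linarith
  have fa: "w * (a m + \<alpha> * S) + (1 - w) * A \<le> sqrt (2 * w) * S"
    by (rule final_alg[OF w(1) w(2) sl_pos sl_le \<alpha>_def ann uA c])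
  have "cost M Bs n id x w = w * (a m + \<alpha> * S) + (1 - w) * A"
    unfolding cost_eq sumI sumA ..
  then show ?thesis using fa unfolding goal_eq S_def by simp
qed

end
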